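(* Let $a,b\in\mathbb{H}$ have norm one and let $T_{a,b}(x)=axb$. Then $\psi(\psi(y)\bar x+yx)=\psi(y)\bar x+yx$ holds for all $x,y\in\mathbb{H}$ with $\psi=T_{a,b}$ if and only if $a=b=\pm1$, i.e. $T_{a,b}=I_{\mathbb{H}}$.
   Context: $\bar x$ denotes quaternion conjugation and $I_{\mathbb{H}}$ the identity map. *)

theory Defs
  imports Complex_Main
begin

datatype quat = Quat (Re: real) (Im1: real) (Im2: real) (Im3: real)

instantiation quat :: "{zero, one, plus, uminus, times}"
begin
definition "0 = Quat 0 0 0 0"
definition "1 = Quat 1 0 0 0"
definition "x + y = Quat (Re x + Re y) (Im1 x + Im1 y) (Im2 x + Im2 y) (Im3 x + Im3 y)"
definition "- x = Quat (- Re x) (- Im1 x) (- Im2 x) (- Im3 x)"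
definition "x * y = Quat
   (Re x * Re y - Im1 x * Im1 y - Im2 x * Im2 y - Im3 x * Im3 y)
   (Re x * Im1 y + Im1 x * Re y + Im2 x * Im3 y - Im3 x * Im2 y)
   (Re x * Im2 y - Im1 x * Im3 y + Im2 x * Re y + Im3 x * Im1 y)
   (Re x * Im3 y + Im1 x * Im2 y - Im2 x * Im1 y + Im3 x * Re y)"
instance ..
end

definition qcnj :: "quat \<Rightarrow> quat" where
  "qcnj x = Quat (Re x) (- Im1 x) (- Im2 x) (- Im3 x)"

definition qnorm :: "quat \<Rightarrow> real" where
  "qnorm x = sqrt ((Re x)\<^sup>2 + (Im1 x)\<^sup>2 + (Im2 x)\<^sup>2 + (Im3 x)\<^sup>2)"

definition T :: "quat \<Rightarrow> quat \<Rightarrow> quat \<Rightarrow> quat" where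
  "T a b x = a * x * b"

end

theory Submission
  imports Defs
begin
lemma quat_eq_iff: "x = y \<longleftrightarrow> Re x = Re y \<and> Im1 x = Im1 y \<and> Im2 x = Im2 y \<and> Im3 x = Im3 y"
  by (cases x; cases y) auto
instantiation quat :: minus begin
definition "x - (y::quat) = x + - y"
instance ..
end
lemma qsimps[simp]:
 "Re 0 = 0" "Im1 0 = 0" "Im2 0 = 0" "Im3 0 = 0"
 "Re 1 = 1" "Im1 1 = 0" "Im2 1 = 0" "Im3 1 = 0"
 "Re (x+y) = Re x + Re y" "Im1 (x+y) = Im1 x + Im1 y" "Im2 (x+y) = Im2 x + Im2 y" "Im3 (x+y) = Im3 x + Im3 y"
 "Re (-x) = - Re x" "Im1 (-x) = - Im1 x" "Im2 (-x) = - Im2 x" "Im3 (-x) = - Im3 x"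
 "Re (x-y) = Re x - Re y" "Im1 (x-y) = Im1 x - Im1 y" "Im2 (x-y) = Im2 x - Im2 y" "Im3 (x-y) = Im3 x - Im3 y"
 "Re (x*y) = Re x * Re y - Im1 x * Im1 y - Im2 x * Im2 y - Im3 x * Im3 y"
 "Im1 (x*y) = Re x * Im1 y + Im1 x * Re y + Im2 x * Im3 y - Im3 x * Im2 y"
 "Im2 (x*y) = Re x * Im2 y - Im1 x * Im3 y + Im2 x * Re y + Im3 x * Im1 y"
 "Im3 (x*y) = Re x * Im3 y + Im1 x * Im2 y - Im2 x * Im1 y + Im3 x * Re y"
 "Re (qcnj x) = Re x" "Im1 (qcnj x) = - Im1 x" "Im2 (qcnj x) = - Im2 x" "Im3 (qcnj x) = - Im3 x"
  by (simp_all add: zero_quat_def one_quat_def plus_quat_def uminus_quat_def minus_quat_def times_quat_def qcnj_def)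
instance quat :: ring_1
  by standard (auto simp: quat_eq_iff algebra_simps)
lemma pure_case:
  fixes p1 p2 p3 q1 q2 q3 :: real
  defines "a \<equiv> Quat 0 p1 p2 p3" and "b \<equiv> Quat 0 q1 q2 q3"
  assumes na: "p1^2+p2^2+p3^2 = 1" and nb: "q1^2+q2^2+q3^2 = 1"
  and H: "T a b (T a b 1 * qcnj b + 1 * b) = T a b 1 * qcnj b + 1 * b"
  shows "a + b = 0"
proof -
  from H have e: "Re (T a b (T a b 1 * qcnj b + 1 * b)) = Re (T a b 1 * qcnj b + 1 * b)"
    "Im1 (T a b (T a b 1 * qcnj b + 1 * b)) = Im1 (T a b 1 * qcnj b + 1 * b)"
    "Im2 (T a b (T a b 1 * qcnj b + 1 * b)) = Im2 (T a b 1 * qcnj b + 1 * b)"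
    "Im3 (T a b (T a b 1 * qcnj b + 1 * b)) = Im3 (T a b 1 * qcnj b + 1 * b)" by simp_all
  note e = e[unfolded T_def, simplified, unfolded a_def b_def, simplified]
  have "p1 + q1 = 0" "p2 + q2 = 0" "p3 + q3 = 0" using e na nb by algebra+
  then show ?thesis by (simp add: quat_eq_iff a_def b_def)
qed
lemma pure_case2:
  fixes p1 p2 p3 :: real
  defines "a \<equiv> Quat 0 p1 p2 p3"
  assumes na: "p1^2+p2^2+p3^2 = 1"
  and H1: "T a (-a) (T a (-a) (Quat 0 1 0 0) * qcnj a + (Quat 0 1 0 0) * a) = T a (-a) (Quat 0 1 0 0) * qcnj a + (Quat 0 1 0 0) * a"
  and H2: "T a (-a) (T a (-a) (Quat 0 0 1 0) * qcnj a + (Quat 0 0 1 0) * a) = T a (-a) (Quat 0 0 1 0) * qcnj a + (Quat 0 0 1 0) * a"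
  shows False
proof -
  note e1 = H1[unfolded quat_eq_iff T_def, simplified, unfolded a_def, simplified]
  note e2 = H2[unfolded quat_eq_iff T_def, simplified, unfolded a_def, simplified]
  have "p1^2 = 1" using e1 na by algebra
  moreover have "p2^2 = 1" using e2 na by algebra
  moreover have "p1*p2 = 0" using e1 na by algebra
  ultimately have "(1::real) = 0" by algebra
  then show False by simp
qed
theorem lemma9:
  fixes a b :: quat
  assumes "qnorm a = 1" and "qnorm b = 1"
  shows "(\<forall>x y. T a b (T a b y * qcnj x + y * x) = T a b y * qcnj x + y * x)
         \<longleftrightarrow> ((a = 1 \<and> b = 1) \<or> (a = - 1 \<and> b = - 1))"
proof
  assume "(a = 1 \<and> b = 1) \<or> (a = - 1 \<and> b = - 1)"
  then show "\<forall>x y. T a b (T a b y * qcnj x + y * x) = T a b y * qcnj x + y * x"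
    by (auto simp: T_def)
next
  assume H: "\<forall>x y. T a b (T a b y * qcnj x + y * x) = T a b y * qcnj x + y * x"
  have H': "T a b (T a b y * qcnj x + y * x) = T a b y * qcnj x + y * x" for x y using H by blast
  obtain p0 p1 p2 p3 where a: "a = Quat p0 p1 p2 p3" by (cases a)
  obtain q0 q1 q2 q3 where b: "b = Quat q0 q1 q2 q3" by (cases b)
  have na: "p0^2+p1^2+p2^2+p3^2 = 1" using assms(1) by (simp add: qnorm_def a)
  have nb: "q0^2+q1^2+q2^2+q3^2 = 1" using assms(2) by (simp add: qnorm_def b)
  have aa: "a * qcnj a = 1" using na by (simp add: quat_eq_iff a power2_eq_square)
  have c1: "qcnj 1 = 1" by (simp add: quat_eq_iff)
  have S: "a*(a*y*b)*b = y" for y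
  proof -
    have "a*(a*y*b*1 + y*1)*b = a*y*b*1 + y*1" using H'[where x=1 and y=y] by (simp add: T_def c1)
    then show ?thesis by (simp add: ring_distribs)
  qed
  have K: "u*(b*b) = qcnj a*qcnj a*u" for u
  proof -
    have "a*(a*(qcnj a*qcnj a*u)*b)*b = (a*(a*qcnj a)*qcnj a)*u*(b*b)" by (simp add: mult.assoc)
    also have "\<dots> = u*(b*b)" by (simp add: aa)
    finally show ?thesis using S[of "qcnj a*qcnj a*u"] by simp
  qed
  have K0: "b*b = qcnj a*qcnj a" using K[of 1] by simp
  have Ki: "Quat 0 1 0 0 * (b*b) = (b*b) * Quat 0 1 0 0" using K[of "Quat 0 1 0 0"] K0 by simp
  have Kj: "Quat 0 0 1 0 * (b*b) = (b*b) * Quat 0 0 1 0" using K[of "Quat 0 0 1 0"] K0 by simp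
  note e0 = K0[unfolded quat_eq_iff, simplified, unfolded a b, simplified]
  note ei = Ki[unfolded quat_eq_iff, simplified, unfolded b, simplified]
  note ej = Kj[unfolded quat_eq_iff, simplified, unfolded b, simplified]
  have z1: "q0*q1 = 0" "q0*q2 = 0" "q0*q3 = 0" using ei ej by algebra+
  show "(a = 1 \<and> b = 1) \<or> (a = - 1 \<and> b = - 1)"
  proof (cases "q0 = 0")
    case True
    have "p0^2 = 0" using e0 na nb True by algebra
    then have p0: "p0 = 0" by simp
    have nb': "q1^2+q2^2+q3^2 = 1" using nb True by simp
    have na': "p1^2+p2^2+p3^2 = 1" using na p0 by simp
    have "a + b = 0"
      using pure_case[OF na' nb'] H'[where x=b and y=1] by (simp add: a b p0 True)
    then have bma: "b = - a" by (simp add: eq_neg_iff_add_eq_0 add.commute)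
    have a0: "a = Quat 0 p1 p2 p3" using a p0 by simp
    have h1: "T a (-a) (T a (-a) (Quat 0 1 0 0) * qcnj a + (Quat 0 1 0 0) * a) = T a (-a) (Quat 0 1 0 0) * qcnj a + (Quat 0 1 0 0) * a"
      using H'[where x=a and y="Quat 0 1 0 0"] unfolding bma .
    have h2: "T a (-a) (T a (-a) (Quat 0 0 1 0) * qcnj a + (Quat 0 0 1 0) * a) = T a (-a) (Quat 0 0 1 0) * qcnj a + (Quat 0 0 1 0) * a"
      using H'[where x=a and y="Quat 0 0 1 0"] unfolding bma .
    have False using pure_case2[OF na' h1[unfolded a0] h2[unfolded a0]] .
    then show ?thesis ..
  next
    case False
    then have q: "q1 = 0" "q2 = 0" "q3 = 0" using z1 by simp_all
    have q0: "q0^2 = 1" using nb q by simp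
    have "q0*q0 - q1*q1 - q2*q2 - q3*q3 = p0*p0 - p1*p1 - p2*p2 - p3*p3" using e0(1) by simp
    then have s: "p1^2+p2^2+p3^2 = 0" using na q0 q by (simp add: power2_eq_square)
    have "p1^2 = 0" "p2^2 = 0" "p3^2 = 0"
      using s zero_le_power2[of p1] zero_le_power2[of p2] zero_le_power2[of p3] by linarith+
    then have p: "p1 = 0" "p2 = 0" "p3 = 0" by simp_all
    have p0: "p0^2 = 1" using na p by simp
    have "T a b (T a b 1 * qcnj (Quat 0 1 0 0) + 1 * Quat 0 1 0 0) = T a b 1 * qcnj (Quat 0 1 0 0) + 1 * Quat 0 1 0 0"
      using H by blast
    note h = this[unfolded quat_eq_iff T_def, simplified, unfolded a b p q, simplified]
    have "(1 - p0*q0)^2 = 0" using h p0 q0 by algebra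
    then have t: "p0*q0 = 1" by simp
    have "q0 = p0" using t p0 by algebra
    moreover have "p0 = 1 \<or> p0 = -1" using p0 by (simp add: power2_eq_1_iff)
    ultimately show ?thesis by (auto simp: a b p q quat_eq_iff)
  qed
qed
end
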